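(* Let $1\le m\le k\le l$ be integers with $m\mid l-k+1$. Then $$d_m\Big(\frac{\{k-1\}_q!}{g_{l,k-1}}\Big)=\begin{cases}0 & \text{if } m\mid k,\\ 1 & \text{if } m\nmid k.\end{cases}$$ Consequently $d_m\big(\{k\}_q\,\{k-1\}_q!/g_{l,k-1}\big)=1$.
   Context: In $\mathbb{Z}[q,q^{-1}]$ set $\{i\}_q=q^i-1$, $\{i\}_{q,n}=\{i\}_q\cdots\{i-n+1\}_q$ (equal to $1$ for $n=0$), $\{n\}_q!=\{n\}_{q,n}$. For $0\le i\le k\le l$ set $h_{l,k,i}=\{l-i\}_{q,k-i}\{i\}_q!$ and $g_{l,k}=\mathrm{GCD}(h_{l,k,0},\dots,h_{l,k,k})$ (greatest common divisor in the UFD $\mathbb{Z}[q,q^{-1}]$, up to units); $g_{l,k-1}$ divides $\{k-1\}_q!$. For nonzero $a$ and $m\ge 1$, $d_m(a)$ is the largest integer $i$ with $a\in\Phi_m^i\mathbb{Z}[q,q^{-1}]$, $\Phi_m$ the $m$th cyclotomic polynomial. *)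

theory Defs
  imports "HOL-Computational_Algebra.Computational_Algebra"
begin

text \<open>All quantities involved are genuine polynomials in Z[q] with constant term +-1
  (coprime to q), so we work in Z[q] (type int poly) instead of Z[q,q^-1];
  gcds and cyclotomic multiplicities agree up to units.\<close>

text \<open>The m-th cyclotomic polynomial, via q^n - 1 = prod over d dvd n of Phi_d.\<close>
function cyclotomic :: "nat \<Rightarrow> int poly" where
  "cyclotomic n = (if n = 0 then 1 else
     (monom 1 n - 1) div (\<Prod>d\<in>{d. d dvd n \<and> d < n}. cyclotomic d))"
  by auto
termination
  by (relation "measure id") auto

declare cyclotomic.simps[simp del]

definition qint :: "nat \<Rightarrow> int poly" where
  "qint i = monom 1 i - 1"

text \<open>{i}_{q,n} = {i}_q ... {i-n+1}_q (used only with i - n + 1 >= 0)\<close>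
definition qfall :: "nat \<Rightarrow> nat \<Rightarrow> int poly" where
  "qfall i n = (\<Prod>j<n. qint (i - j))"

definition qfact :: "nat \<Rightarrow> int poly" where
  "qfact n = qfall n n"

definition hlki :: "nat \<Rightarrow> nat \<Rightarrow> nat \<Rightarrow> int poly" where
  "hlki l k i = qfall (l - i) (k - i) * qfact i"

definition glk :: "nat \<Rightarrow> nat \<Rightarrow> int poly" where
  "glk l k = Gcd ((\<lambda>i. hlki l k i) ` {0..k})"

definition dm :: "nat \<Rightarrow> int poly \<Rightarrow> nat" where
  "dm m a = multiplicity (cyclotomic m) a"

end

theory Submission
  imports Defs "Jordan_Normal_Form.Char_Poly"
begin

abbreviation cp :: "int poly \<Rightarrow> complex poly" where "cp \<equiv> of_int_poly"

definition prim :: "nat \<Rightarrow> complex set" where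
  "prim n = {z. z ^ n = 1 \<and> (\<forall>d. 0 < d \<and> d < n \<longrightarrow> z ^ d \<noteq> 1)}"

lemma lead_coeff_cp: "lead_coeff (cp p) = of_int (lead_coeff p)"
  by simp

lemma prim_pow_iff:
  assumes "0 < n" "z \<in> prim n"
  shows "z ^ j = 1 \<longleftrightarrow> n dvd j"
proof -
  have zn: "z ^ n = 1" using assms by (simp add: prim_def)
  have "z ^ j = z ^ (n * (j div n) + j mod n)" by simp
  also have "\<dots> = (z ^ n) ^ (j div n) * z ^ (j mod n)" by (simp only: power_add power_mult)
  finally have "z ^ j = (z ^ n) ^ (j div n) * z ^ (j mod n)" .
  hence e: "z ^ j = z ^ (j mod n)" using zn by simp
  show ?thesis
  proof
    assume "z ^ j = 1"
    hence "z ^ (j mod n) = 1" using e by simp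
    moreover have "j mod n < n" using assms by simp
    ultimately have "j mod n = 0" using assms unfolding prim_def by auto
    thus "n dvd j" by auto
  next
    assume "n dvd j" thus "z ^ j = 1" using e by simp
  qed
qed

lemma prim_exists:
  assumes "0 < m"
  shows "cis (2 * pi / real m) \<in> prim m"
proof -
  let ?f = "\<lambda>k. cis (2 * pi * real k / real m)"
  have inj: "inj_on ?f {..<m}" using bij_betw_roots_unity[OF assms] by (simp add: bij_betw_def)
  have pw: "cis (2 * pi / real m) ^ d = ?f d" for d
    by (simp add: DeMoivre mult.commute)
  have "?f m = 1"
    using assms by (simp add: complex_eq_iff)
  hence "cis (2 * pi / real m) ^ m = 1" by (simp only: pw)
  moreover have "cis (2 * pi / real m) ^ d \<noteq> 1" if "0 < d" "d < m" for d
  proof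
    assume "cis (2 * pi / real m) ^ d = 1"
    hence "?f d = ?f 0" by (simp only: pw) simp
    moreover have "d \<in> {..<m}" "0 \<in> {..<m}" using that by auto
    ultimately have "d = 0" by (rule inj_onD[OF inj])
    thus False using that by simp
  qed
  ultimately show ?thesis unfolding prim_def by auto
qed

lemma prim_disjoint:
  assumes "0 < d" "0 < e" "z \<in> prim d" "z \<in> prim e"
  shows "d = e"
proof -
  have ze: "z ^ e = 1" using assms(4) unfolding prim_def by blast
  have zd: "z ^ d = 1" using assms(3) unfolding prim_def by blast
  have "d dvd e" using prim_pow_iff[OF assms(1,3), THEN iffD1, OF ze] .
  moreover have "e dvd d" using prim_pow_iff[OF assms(2,4), THEN iffD1, OF zd] .
  ultimately show ?thesis by (rule dvd_antisym)
qed

lemma roots_partition: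
  assumes "0 < n"
  shows "{z::complex. z ^ n = 1} = (\<Union>d\<in>{d. d dvd n}. prim d)"
proof (intro equalityI subsetI)
  fix z :: complex assume "z \<in> {z. z ^ n = 1}"
  hence zn: "z ^ n = 1" by simp
  define d where "d = (LEAST d. 0 < d \<and> z ^ d = 1)"
  have ex: "0 < n \<and> z ^ n = 1" using assms zn by simp
  have d: "0 < d \<and> z ^ d = 1" unfolding d_def by (rule LeastI[of _ n], fact)
  have "\<not> (0 < d' \<and> z ^ d' = 1)" if "d' < d" for d'
    using that unfolding d_def by (rule not_less_Least)
  hence zp: "z \<in> prim d" using d unfolding prim_def by auto
  have "d dvd n" using prim_pow_iff[of d z n, THEN iffD1] d zp zn by blast
  thus "z \<in> (\<Union>d\<in>{d. d dvd n}. prim d)" using zp by auto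
next
  fix z assume "z \<in> (\<Union>d\<in>{d. d dvd n}. prim d)"
  then obtain d where dn: "d dvd n" and zd: "z \<in> prim d" by auto
  have d0: "0 < d" using dn assms by (cases d) auto
  have "z ^ n = 1" using prim_pow_iff[OF d0 zd, of n] dn by simp
  thus "z \<in> {z. z ^ n = 1}" by simp
qed

lemma finite_prim:
  assumes "0 < n" shows "finite (prim n)"
proof -
  have "prim n \<subseteq> {z. z ^ n = 1}" by (auto simp: prim_def)
  moreover have "finite {z::complex. z ^ n = 1}" using finite_roots_unity[of n] assms by simp
  ultimately show ?thesis by (rule finite_subset)
qed

lemma prod_lin_dvd:
  fixes p :: "complex poly"
  assumes "finite S" "p \<noteq> 0" "\<forall>z\<in>S. c \<le> order z p"
  shows "(\<Prod>z\<in>S. [:-z,1:] ^ c) dvd p"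
  using assms
proof (induction S rule: finite_induct)
  case empty thus ?case by simp
next
  case (insert x F)
  from insert have "(\<Prod>z\<in>F. [:-z,1:] ^ c) dvd p" by auto
  then obtain g where g: "p = (\<Prod>z\<in>F. [:-z,1:] ^ c) * g" by (auto elim: dvdE)
  have nz: "(\<Prod>z\<in>F. [:-z,1:] ^ c) * g \<noteq> 0" using g insert by simp
  have "poly (\<Prod>z\<in>F. [:-z,1:] ^ c) x \<noteq> 0"
    using insert by (auto simp: poly_prod)
  hence o0: "order x (\<Prod>z\<in>F. [:-z,1:] ^ c) = 0" by (rule order_0I)
  have "order x p = order x g" using order_mult[OF nz] o0 g by simp
  hence "c \<le> order x g" using insert by simp
  moreover have "g \<noteq> 0" using nz by auto
  ultimately have "[:-x,1:] ^ c dvd g" by (simp add: order_divides)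
  hence "[:-x,1:] ^ c * (\<Prod>z\<in>F. [:-z,1:] ^ c) dvd (\<Prod>z\<in>F. [:-z,1:] ^ c) * g"
    by (simp add: mult.commute mult_dvd_mono)
  thus ?case using insert g by simp
qed

lemma unity_poly:
  assumes "0 < n"
  shows "(monom 1 n - 1 :: complex poly) = (\<Prod>z\<in>{z. z ^ n = 1}. [:-z,1:])"
proof -
  let ?X = "monom 1 n - 1 :: complex poly"
  let ?P = "\<Prod>z\<in>{z::complex. z ^ n = 1}. [:-z,1:]"
  have fin: "finite {z::complex. z ^ n = 1}" using assms by (intro finite_roots_unity) simp
  have cX: "coeff ?X n = 1" using assms by (simp add: coeff_monom)
  hence X0: "?X \<noteq> 0" by (metis coeff_0 zero_neq_one)
  have dX: "degree ?X = n"
  proof (rule antisym)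
    show "degree ?X \<le> n" by (rule degree_diff_le) (auto simp: degree_monom_le)
    show "n \<le> degree ?X" using cX by (intro le_degree) simp
  qed
  have "\<forall>z\<in>{z. z ^ n = 1}. 1 \<le> order z ?X"
  proof
    fix z :: complex assume "z \<in> {z. z ^ n = 1}"
    hence "poly ?X z = 0" by (simp add: poly_monom)
    thus "1 \<le> order z ?X" using X0 order_root by (metis less_one not_le)
  qed
  from prod_lin_dvd[OF fin X0 this] have "?P dvd ?X" by simp
  then obtain g where g: "?X = ?P * g" by (auto elim: dvdE)
  have dP: "degree ?P = n"
    using assms by (subst degree_prod_eq_sum_degree) (auto simp: card_roots_unity_eq)
  have g0: "g \<noteq> 0" using g X0 by auto
  have P0: "?P \<noteq> 0" using g X0 by auto
  have "degree ?X = degree ?P + degree g" using g degree_mult_eq[OF P0 g0] by simp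
  hence "degree g = 0" using dX dP by simp
  then obtain c where c: "g = [:c:]" using degree0_coeffs by auto
  have "lead_coeff ?P = 1" by (simp add: lead_coeff_prod)
  hence "lead_coeff ?X = c" using g c by (simp add: lead_coeff_mult)
  moreover have "lead_coeff ?X = 1" using dX cX by simp
  ultimately have "g = 1" using c by (simp add: one_pCons)
  thus ?thesis using g by simp
qed

lemma transfer_dvd:
  fixes p f :: "int poly"
  assumes lc: "lead_coeff p = 1" and d: "cp p dvd cp f"
  shows "p dvd f"
proof -
  have p0: "p \<noteq> 0" using lc by auto
  obtain q r where pdm: "pseudo_divmod f p = (q, r)" by (cases "pseudo_divmod f p") auto
  from pseudo_divmod[OF p0 pdm] lc
  have e: "f = p * q + r" and dr: "r = 0 \<or> degree r < degree p" by auto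
  have "cp f = cp p * cp q + cp r" using e by (simp add: of_int_poly_hom.hom_add of_int_poly_hom.hom_mult)
  hence "cp r = cp f - cp p * cp q" by simp
  hence rd: "cp p dvd cp r" using d by simp
  have "r = 0"
  proof (rule ccontr)
    assume r0: "r \<noteq> 0"
    hence "cp r \<noteq> 0" by simp
    from dvd_imp_degree_le[OF rd this] have "degree p \<le> degree r" by simp
    thus False using dr r0 by simp
  qed
  thus ?thesis using e by simp
qed

lemma cyclo_main:
  "0 < n \<Longrightarrow> cp (cyclotomic n) = (\<Prod>z\<in>prim n. [:-z,1:])"
proof (induction n rule: less_induct)
  case (less n)
  define D where "D = {d. d dvd n \<and> d < n}"
  define X where "X = (monom 1 n - 1 :: int poly)"
  define P where "P = (\<Prod>d\<in>D. cyclotomic d)"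
  have finD: "finite D" unfolding D_def by auto
  have Dpos: "\<forall>d\<in>D. 0 < d" unfolding D_def using less.prems by (auto intro: Nat.gr0I)
  have cP: "cp P = (\<Prod>d\<in>D. \<Prod>z\<in>prim d. [:-z,1:])"
    unfolding P_def of_int_poly_hom.hom_prod
    by (rule prod.cong) (use less.IH Dpos in \<open>auto simp: D_def\<close>)
  also have "\<dots> = (\<Prod>z\<in>(\<Union>d\<in>D. prim d). [:-z,1:])"
    by (rule prod.UNION_disjoint[symmetric]) (use finD Dpos finite_prim prim_disjoint in blast)+
  finally have cP: "cp P = (\<Prod>z\<in>(\<Union>d\<in>D. prim d). [:-z,1:])" .
  have part: "{z::complex. z ^ n = 1} = (\<Union>d\<in>D. prim d) \<union> prim n"
  proof -
    have dd: "\<And>d. d dvd n \<Longrightarrow> d = n \<or> d < n" using dvd_imp_le less.prems by force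
    have rp: "{z::complex. z ^ n = 1} = (\<Union>d\<in>{d. d dvd n}. prim d)"
      by (rule roots_partition[OF less.prems])
    have "{d. d dvd n} = insert n D" unfolding D_def using dd by auto
    hence "(\<Union>d\<in>{d. d dvd n}. prim d) = prim n \<union> (\<Union>d\<in>D. prim d)" by simp
    with rp show ?thesis by (simp add: Un_commute)
  qed
  have disj: "(\<Union>d\<in>D. prim d) \<inter> prim n = {}"
  proof (rule ccontr)
    assume "(\<Union>d\<in>D. prim d) \<inter> prim n \<noteq> {}"
    then obtain z d where zd: "d \<in> D" "z \<in> prim d" "z \<in> prim n" by blast
    have "d = n" by (rule prim_disjoint[OF _ less.prems zd(2,3)]) (use Dpos zd(1) in auto)
    thus False using zd(1) unfolding D_def by simp
  qed
  have fin1: "finite (\<Union>d\<in>D. prim d)" using finD Dpos finite_prim by simp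
  have cX: "cp X = cp P * (\<Prod>z\<in>prim n. [:-z,1:])"
    unfolding cP X_def
    by (simp add: of_int_poly_hom.hom_minus map_poly_monom unity_poly[OF less.prems] part
        prod.union_disjoint[OF fin1 finite_prim[OF less.prems] disj])
  have lcP: "lead_coeff P = 1"
  proof -
    have "lead_coeff (cp P) = 1" unfolding cP by (simp add: lead_coeff_prod)
    thus ?thesis by simp
  qed
  have "P dvd X" by (rule transfer_dvd[OF lcP]) (simp add: cX)
  hence XP: "X = P * (X div P)" by simp
  have cyc: "cyclotomic n = X div P"
    using less.prems by (subst cyclotomic.simps) (simp add: X_def P_def D_def)
  have "cp P * cp (X div P) = cp P * (\<Prod>z\<in>prim n. [:-z,1:])"
    using cX XP by (metis of_int_poly_hom.hom_mult)
  moreover have "cp P \<noteq> 0" using lcP by auto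
  ultimately show ?case unfolding cyc by simp
qed

lemma cyclo_monic: "0 < n \<Longrightarrow> lead_coeff (cyclotomic n) = 1"
proof -
  assume n: "0 < n"
  have "lead_coeff (cp (cyclotomic n)) = 1" unfolding cyclo_main[OF n] by (simp add: lead_coeff_prod)
  thus ?thesis by simp
qed

lemma cyc_dvd_order:
  assumes "0 < m" "cyclotomic m ^ c dvd f" "f \<noteq> 0" "z \<in> prim m"
  shows "c \<le> order z (cp f)"
proof -
  have "cp (cyclotomic m ^ c) dvd cp f" using assms(2) by (rule of_int_poly_hom.hom_dvd)
  hence "(\<Prod>z\<in>prim m. [:-z,1:]) ^ c dvd cp f"
    by (simp add: of_int_poly_hom.hom_power cyclo_main[OF assms(1)])
  moreover have "[:-z,1:] dvd (\<Prod>z\<in>prim m. [:-z,1:])"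
    using assms(4) finite_prim[OF assms(1)] by (intro dvd_prodI) auto
  ultimately have "[:-z,1:] ^ c dvd cp f" by (meson dvd_power_same dvd_trans)
  thus ?thesis using assms(3) by (simp add: order_divides)
qed

lemma order_cyc_dvd:
  assumes "0 < m" "f \<noteq> 0" "\<forall>z\<in>prim m. c \<le> order z (cp f)"
  shows "cyclotomic m ^ c dvd f"
proof -
  have "cp f \<noteq> 0" using assms by simp
  from prod_lin_dvd[OF finite_prim[OF assms(1)] this assms(3)]
  have "(\<Prod>z\<in>prim m. [:-z,1:] ^ c) dvd cp f" .
  hence d: "cp (cyclotomic m ^ c) dvd cp f"
    by (simp add: of_int_poly_hom.hom_power cyclo_main[OF assms(1)] prod_power_distrib)
  have lc: "lead_coeff (cyclotomic m ^ c) = 1"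
    by (simp add: lead_coeff_power cyclo_monic[OF assms(1)])
  show ?thesis by (rule transfer_dvd[OF lc d])
qed

lemma dm_eqI:
  assumes "0 < m" "f \<noteq> 0" "\<forall>z\<in>prim m. order z (cp f) = c"
  shows "dm m f = c"
  unfolding dm_def
proof (rule multiplicity_eqI)
  show "cyclotomic m ^ c dvd f" by (rule order_cyc_dvd) (use assms in auto)
  show "\<not> cyclotomic m ^ Suc c dvd f"
  proof
    assume "cyclotomic m ^ Suc c dvd f"
    from cyc_dvd_order[OF assms(1) this assms(2) prim_exists[OF assms(1)]] assms prim_exists[OF assms(1)]
    show False by simp
  qed
qed

lemma qint_nz: "0 < j \<Longrightarrow> qint j \<noteq> 0"
proof
  assume "0 < j" "qint j = 0"
  hence "coeff (qint j) j = 0" by simp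
  thus False using \<open>0 < j\<close> by (simp add: qint_def coeff_monom)
qed

lemma order_qint:
  assumes "0 < m" "z \<in> prim m" "0 < j"
  shows "order z (cp (qint j)) = (if m dvd j then 1 else 0)"
proof -
  have cq: "cp (qint j) = monom 1 j - 1"
    by (simp add: qint_def of_int_poly_hom.hom_minus map_poly_monom)
  have X0: "cp (qint j) \<noteq> 0" using qint_nz[OF assms(3)] by simp
  have z0: "z \<noteq> 0" using assms by (auto simp: prim_def power_0_left)
  have pv: "poly (cp (qint j)) z = z ^ j - 1" unfolding cq by (simp add: poly_monom)
  show ?thesis
  proof (cases "m dvd j")
    case True
    hence r: "poly (cp (qint j)) z = 0" using pv prim_pow_iff[OF assms(1,2)] by simp
    have "pderiv (cp (qint j)) = monom (of_nat j) (j - 1)" unfolding cq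
      by (simp add: pderiv_diff pderiv_monom)
    hence "poly (pderiv (cp (qint j))) z \<noteq> 0" using z0 assms(3) by (simp add: poly_monom)
    hence "order z (pderiv (cp (qint j))) = 0" by (rule order_0I)
    thus ?thesis using order_pderiv[OF X0 r] True by simp
  next
    case False
    hence "poly (cp (qint j)) z \<noteq> 0" using pv prim_pow_iff[OF assms(1,2)] by simp
    thus ?thesis using False by (simp add: order_0I)
  qed
qed

lemma qfall_nz: assumes "b \<le> a" shows "qfall a b \<noteq> 0"
proof -
  have "qint (a - j) \<noteq> 0" if "j < b" for j using that assms by (intro qint_nz) simp
  thus ?thesis unfolding qfall_def by simp
qed

lemma suc_div: "0 < (m::nat) \<Longrightarrow> Suc x div m = x div m + (if m dvd Suc x then 1 else 0)"
  by (simp add: div_Suc dvd_eq_mod_eq_0)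

lemma order_qfall:
  assumes "0 < m" "z \<in> prim m" "b \<le> a"
  shows "order z (cp (qfall a b)) = a div m - (a - b) div m"
  using assms(3)
proof (induction b)
  case 0 thus ?case by (simp add: qfall_def)
next
  case (Suc b)
  have e: "qfall a (Suc b) = qfall a b * qint (a - b)" by (simp add: qfall_def)
  have nz: "cp (qfall a b) * cp (qint (a - b)) \<noteq> 0"
    using qfall_nz[of b a] qint_nz[of "a - b"] Suc.prems by simp
  have "order z (cp (qfall a (Suc b))) = order z (cp (qfall a b)) + order z (cp (qint (a - b)))"
    unfolding e of_int_poly_hom.hom_mult by (rule order_mult[OF nz])
  also have "\<dots> = a div m - (a - b) div m + (if m dvd (a - b) then 1 else 0)"
    using Suc order_qint[OF assms(1,2), of "a - b"] by simp
  also have "\<dots> = a div m - (a - Suc b) div m"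
  proof -
    have s: "a - b = Suc (a - Suc b)" using Suc.prems by simp
    have le: "Suc (a - Suc b) div m \<le> a div m" by (rule div_le_mono) (use Suc.prems in simp)
    show ?thesis unfolding s using le suc_div[OF assms(1), of "a - Suc b"] by simp
  qed
  finally show ?case .
qed

lemma order_qfact:
  assumes "0 < m" "z \<in> prim m"
  shows "order z (cp (qfact n)) = n div m"
  using order_qfall[OF assms, of n n] by (simp add: qfact_def)

lemma ord_mult:
  assumes "f * g \<noteq> 0"
  shows "order z (cp (f * g)) = order z (cp f) + order z (cp g)"
proof -
  have "cp f * cp g \<noteq> 0" using assms by simp
  thus ?thesis unfolding of_int_poly_hom.hom_mult by (rule order_mult)
qed

lemma dvd_two_m:
  fixes c m :: nat
  assumes "m dvd c" "0 < c" "c < 2 * m"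
  shows "c = m"
proof -
  obtain q where q: "c = m * q" using assms(1) by auto
  have "0 < q" using q assms(2) by (cases q) auto
  moreover have "q < 2" using q assms(3) by (metis mult.commute mult_less_cancel1)
  ultimately have "q = 1" by simp
  thus ?thesis using q by simp
qed

lemma ar1:
  fixes m n x y :: nat
  assumes m: "0 < m" and xy: "x + y = n"
  shows "n div m - (if m dvd Suc n then 0 else 1) \<le> x div m + y div m"
proof -
  have e: "n div m = x div m + y div m + (x mod m + y mod m) div m"
    using div_add1_eq[of x y m] xy by simp
  have ltx: "x mod m < m" and lty: "y mod m < m" using m by simp_all
  hence lt: "x mod m + y mod m < 2 * m" by linarith
  have le1: "(x mod m + y mod m) div m < 2" using lt m by (simp add: div_less_iff_less_mult mult.commute)
  show ?thesis
  proof (cases "m dvd Suc n")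
    case True
    have sn: "Suc n = m * (x div m + y div m) + (x mod m + y mod m + 1)"
      using xy div_mult_mod_eq[of x m] div_mult_mod_eq[of y m] by (simp add: algebra_simps)
    have "m dvd (m * (x div m + y div m) + (x mod m + y mod m + 1))"
      using True by (simp only: sn)
    hence "m dvd (x mod m + y mod m + 1)"
      by (simp only: dvd_add_right_iff[OF dvd_triv_left])
    moreover have "x mod m + y mod m + 1 < 2 * m" using ltx lty by linarith
    ultimately have "x mod m + y mod m + 1 = m" by (intro dvd_two_m) auto
    hence "(x mod m + y mod m) div m = 0" using m by simp
    thus ?thesis using e True by simp
  next
    case False thus ?thesis using e le1 by simp
  qed
qed

lemma ar2:
  fixes m n :: nat
  assumes m: "0 < m" and mk: "m \<le> Suc n"
  shows "\<exists>i\<le>n. (n - i) div m + i div m = n div m - (if m dvd Suc n then 0 else 1)"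
proof (cases "m dvd Suc n")
  case True thus ?thesis by (intro exI[of _ 0]) simp
next
  case False
  have i: "m - 1 \<le> n" using mk by simp
  have "(m - 1) div m = 0" using m by simp
  moreover have "n - (m - 1) = Suc n - m" using mk m by simp
  moreover have "Suc n div m = Suc ((Suc n - m) div m)"
  proof -
    have "Suc n = (Suc n - m) + m" using mk by simp
    moreover have "((Suc n - m) + m) div m = Suc ((Suc n - m) div m)" using m by simp
    ultimately show ?thesis by simp
  qed
  moreover have "Suc n div m = n div m" using suc_div[OF m, of n] False by simp
  ultimately have "(n - (m - 1)) div m + (m - 1) div m = n div m - 1" by simp
  thus ?thesis using False i by (intro exI[of _ "m - 1"]) simp
qed

theorem mainTheorem7:
  fixes m k l :: nat
  assumes "1 \<le> m" "m \<le> k" "k \<le> l" "m dvd (l - k + 1)"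
  shows "dm m (qfact (k - 1) div glk l (k - 1)) = (if m dvd k then 0 else 1)
         \<and> dm m (qint k * (qfact (k - 1) div glk l (k - 1))) = 1"
proof -
  have m0: "0 < m" using assms by simp
  define n where "n = k - 1"
  have kn: "k = Suc n" using assms unfolding n_def by simp
  define e where "e = (if m dvd k then 0 else 1 :: nat)"
  define B where "B = n div m - e"
  obtain t where t: "l - k + 1 = m * t" using assms(4) by auto
  define h where "h = (\<lambda>i. hlki l n i)"
  have hnz: "h i \<noteq> 0" if "i \<le> n" for i
    using that assms kn qfall_nz[of "n - i" "l - i"] qfall_nz[of i i]
    by (simp add: h_def hlki_def qfact_def)
  have ordh: "order z (cp (h i)) = (n - i) div m + i div m" if "i \<le> n" "z \<in> prim m" for i z
  proof -
    have le: "n - i \<le> l - i" using that assms kn by simp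
    have a: "l - i - (n - i) = m * t" using that assms kn t by simp
    have b: "l - i = m * t + (n - i)" using that assms kn t by simp
    have "order z (cp (h i)) = order z (cp (qfall (l - i) (n - i))) + order z (cp (qfact i))"
      unfolding h_def hlki_def using hnz[OF that(1)] by (intro ord_mult) (simp add: h_def hlki_def)
    also have "\<dots> = (l - i) div m - (l - i - (n - i)) div m + i div m"
      using order_qfall[OF m0 that(2) le] order_qfact[OF m0 that(2)] by simp
    also have "\<dots> = (n - i) div m + i div m"
      unfolding a b using m0 by simp
    finally show ?thesis .
  qed
  have eB: "B = n div m - (if m dvd Suc n then 0 else 1)" unfolding B_def e_def kn ..
  have ar1': "B \<le> (n - i) div m + i div m" if "i \<le> n" for i
    unfolding eB by (rule ar1[OF m0]) (use that in simp)
  obtain i0 where i0: "i0 \<le> n" "(n - i0) div m + i0 div m = B"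
    using ar2[OF m0, of n] assms kn unfolding eB by auto
  have en: "e \<le> n div m"
  proof (cases "m dvd k")
    case True thus ?thesis by (simp add: e_def)
  next
    case False
    hence "m \<noteq> k" by auto
    hence "m \<le> n" using assms kn by simp
    hence "m div m \<le> n div m" by (rule div_le_mono)
    thus ?thesis using m0 False by (simp add: e_def)
  qed
  define F where "F = qfact n"
  define G where "G = glk l n"
  have Gdef: "G = Gcd (h ` {0..n})" unfolding G_def glk_def h_def ..
  have hn: "h n = F" by (simp add: h_def hlki_def F_def qfall_def)
  have F0: "F \<noteq> 0" using hn hnz by auto
  have GF: "G dvd F" unfolding Gdef hn[symmetric] by (rule Gcd_dvd) auto
  have G0: "G \<noteq> 0" using GF F0 by auto
  define Q where "Q = F div G"
  have FGQ: "F = G * Q" unfolding Q_def using GF by simp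
  have Q0: "Q \<noteq> 0" using FGQ F0 by auto
  have ordQ: "order z (cp Q) = e" if z: "z \<in> prim m" for z
  proof -
    have "cyclotomic m ^ B dvd h i" if "i \<in> {0..n}" for i
      using that z ar1' hnz ordh by (intro order_cyc_dvd[OF m0]) auto
    hence "cyclotomic m ^ B dvd G" unfolding Gdef by (intro Gcd_greatest) auto
    hence g1: "B \<le> order z (cp G)" by (rule cyc_dvd_order[OF m0 _ G0 z])
    have "G dvd h i0" unfolding Gdef using i0 by (intro Gcd_dvd) auto
    then obtain w where w: "h i0 = G * w" by (auto elim: dvdE)
    have "order z (cp (h i0)) = order z (cp G) + order z (cp w)"
      unfolding w by (rule ord_mult) (use w hnz[OF i0(1)] in simp)
    hence g2: "order z (cp G) \<le> B" using ordh[OF i0(1) z] i0 by simp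
    have "order z (cp F) = order z (cp G) + order z (cp Q)"
      unfolding FGQ by (rule ord_mult) (use FGQ F0 in simp)
    moreover have "order z (cp F) = n div m" unfolding F_def by (rule order_qfact[OF m0 z])
    ultimately show ?thesis using g1 g2 en unfolding B_def by simp
  qed
  have r1: "dm m Q = e" by (rule dm_eqI[OF m0 Q0]) (use ordQ in simp)
  have kQ0: "qint k * Q \<noteq> 0" using Q0 qint_nz[of k] kn by simp
  have r2: "dm m (qint k * Q) = 1"
  proof (rule dm_eqI[OF m0 kQ0], intro ballI)
    fix z assume z: "z \<in> prim m"
    have "order z (cp (qint k * Q)) = order z (cp (qint k)) + order z (cp Q)"
      by (rule ord_mult[OF kQ0])
    thus "order z (cp (qint k * Q)) = 1"
      using order_qint[OF m0 z, of k] kn ordQ[OF z] by (simp add: e_def)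
  qed
  show ?thesis unfolding Q_def[symmetric] F_def[symmetric] G_def[symmetric] n_def[symmetric] e_def[symmetric]
    using r1 r2 by (rule conjI)
qed

end
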